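(* Let $n \geq 6$ and let $K_n$ be the complete graph on $n$ vertices, viewed as an electrical network in which every edge has conductance $1$. Then the smallest number of measurements needed to solve the faulty edge detection problem on this network is exactly $\left\lceil \frac{2n}{3}\right\rceil$.
   Context: An electrical network is a graph $G=(V,E)$ with nonnegative conductances (edge weights); here all conductances equal $1$. For vertices $r,s$, the effective resistance $R_{rs}$ is the reciprocal of the net current flowing through the network when a unit voltage difference is applied between $r$ and $s$. Faulty edge detection problem: an unknown edge $e^*\in E$ has its conductance changed from $1$ to $0$ (the edge is removed). A measurement is an unordered pair $\{r,s\}$ of vertices (any pair of vertices is allowed), and it reveals the effective resistance between $r$ and $s$ in the altered network. A set $S$ of measurements solves the problem if for every two distinct edges $e\neq e'$ of $G$ there is a pair $\{r,s\}\in S$ such that the effective resistance between $r$ and $s$ in $G$ with $e$ removed differs from that in $G$ with $e'$ removed. The quantity in question is the minimum size of such a set $S$. *)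

theory Defs
  imports Complex_Main
begin

text \<open>An electrical network with unit conductances: vertex set V, edge set E
  (edges are two-element sets of vertices).\<close>

definition nbrs :: "'a set \<Rightarrow> 'a set set \<Rightarrow> 'a \<Rightarrow> 'a set" where
  "nbrs V E x = {y \<in> V. {x, y} \<in> E}"

text \<open>Voltage vector when a unit voltage difference is applied between r and s:
  v r = 1, v s = 0, Kirchhoff's current law at every other vertex
  (current through an edge xy of conductance 1 is v x - v y).\<close>
definition is_voltage :: "'a set \<Rightarrow> 'a set set \<Rightarrow> 'a \<Rightarrow> 'a \<Rightarrow> ('a \<Rightarrow> real) \<Rightarrow> bool" where
  "is_voltage V E r s v \<longleftrightarrow> v r = 1 \<and> v s = 0 \<and> (\<forall>x. x \<notin> V \<longrightarrow> v x = 0) \<and>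
     (\<forall>x \<in> V - {r, s}. (\<Sum>y \<in> nbrs V E x. v x - v y) = 0)"

definition net_current :: "'a set \<Rightarrow> 'a set set \<Rightarrow> 'a \<Rightarrow> 'a \<Rightarrow> real" where
  "net_current V E r s = (let v = (THE v. is_voltage V E r s v) in (\<Sum>y \<in> nbrs V E r. v r - v y))"

definition eff_res :: "'a set \<Rightarrow> 'a set set \<Rightarrow> 'a \<Rightarrow> 'a \<Rightarrow> real" where
  "eff_res V E r s = 1 / net_current V E r s"

definition solves_fed :: "'a set \<Rightarrow> 'a set set \<Rightarrow> 'a set set \<Rightarrow> bool" where
  "solves_fed V E S \<longleftrightarrow>
     S \<subseteq> {{r, s} | r s. r \<in> V \<and> s \<in> V \<and> r \<noteq> s} \<and>
     (\<forall>e \<in> E. \<forall>e' \<in> E. e \<noteq> e' \<longrightarrow>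
        (\<exists>r s. {r, s} \<in> S \<and> eff_res V (E - {e}) r s \<noteq> eff_res V (E - {e'}) r s))"

definition min_measurements :: "'a set \<Rightarrow> 'a set set \<Rightarrow> nat" where
  "min_measurements V E = (LEAST k. \<exists>S. solves_fed V E S \<and> card S = k)"

definition complete_edges :: "nat \<Rightarrow> nat set set" where
  "complete_edges n = {{x, y} | x y. x < n \<and> y < n \<and> x \<noteq> y}"

end

theory Submission
  imports Defs
begin


lemma nbrs_Kn_minus:
  assumes e: "e \<in> complete_edges n" and x: "x < n"
  shows "nbrs {..<n} (complete_edges n - {e}) x = {..<n} - (if x \<in> e then e else {x})"
  using e x by (auto simp: nbrs_def complete_edges_def doubleton_eq_iff)

lemma max_principle:
  fixes d :: "'a \<Rightarrow> real"
  assumes fin: "finite V" and rs: "r \<in> V" "s \<in> V"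
    and adj: "\<forall>x\<in>V-{r,s}. nbrs V E x \<inter> {r,s} \<noteq> {}"
    and d0: "d r = 0" "d s = 0"
    and harm: "\<forall>x\<in>V-{r,s}. (\<Sum>y\<in>nbrs V E x. d x - d y) = 0"
  shows "\<forall>x\<in>V. d x \<le> 0"
proof (rule ccontr)
  assume "\<not> (\<forall>x\<in>V. d x \<le> 0)"
  then obtain x1 where x1: "x1 \<in> V" "d x1 > 0" by force
  define M where "M = Max (d ` V)"
  have "M \<in> d ` V" unfolding M_def using fin x1 by (intro Max_in) auto
  then obtain x0 where x0: "x0 \<in> V" "d x0 = M" by auto
  have Mge: "\<forall>y\<in>V. d y \<le> M" unfolding M_def using fin by auto
  have "M > 0" using Mge x1 by (meson less_le_trans)
  hence x0rs: "x0 \<in> V - {r,s}" using x0 d0 by auto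
  have sub: "nbrs V E x0 \<subseteq> V" by (auto simp: nbrs_def)
  hence finN: "finite (nbrs V E x0)" using fin finite_subset by blast
  have nn: "\<forall>y\<in>nbrs V E x0. 0 \<le> d x0 - d y" using sub Mge x0 by auto
  have "\<forall>y\<in>nbrs V E x0. d x0 - d y = 0"
  proof -
    have "(\<Sum>y\<in>nbrs V E x0. d x0 - d y) = 0" using harm x0rs by blast
    moreover have "(\<Sum>y\<in>nbrs V E x0. d x0 - d y) = 0 \<longleftrightarrow> (\<forall>y\<in>nbrs V E x0. d x0 - d y = 0)"
      by (rule sum_nonneg_eq_0_iff[OF finN]) (use nn in auto)
    ultimately show ?thesis by blast
  qed
  moreover obtain y where "y \<in> nbrs V E x0 \<inter> {r,s}" using adj x0rs by blast
  ultimately have "d x0 - d y = 0" by (meson IntD1)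
  moreover have "d y = 0" using \<open>y \<in> nbrs V E x0 \<inter> {r,s}\<close> d0 by auto
  ultimately show False using \<open>M > 0\<close> x0 by simp
qed

lemma voltage_unique:
  assumes fin: "finite V" and rs: "r \<in> V" "s \<in> V"
    and adj: "\<forall>x\<in>V-{r,s}. nbrs V E x \<inter> {r,s} \<noteq> {}"
    and v: "is_voltage V E r s v" and w: "is_voltage V E r s w"
  shows "v = w"
proof -
  have h1: "\<forall>x\<in>V. (\<lambda>x. v x - w x) x \<le> 0"
  proof (rule max_principle[OF fin rs adj])
    show "v r - w r = 0" "v s - w s = 0" using v w by (auto simp: is_voltage_def)
    show "\<forall>x\<in>V-{r,s}. (\<Sum>y\<in>nbrs V E x. (v x - w x) - (v y - w y)) = 0"
    proof
      fix x assume "x \<in> V-{r,s}"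
      hence "(\<Sum>y\<in>nbrs V E x. v x - v y) = 0" "(\<Sum>y\<in>nbrs V E x. w x - w y) = 0"
        using v w unfolding is_voltage_def by blast+
      moreover have "(\<Sum>y\<in>nbrs V E x. (v x - w x) - (v y - w y)) = (\<Sum>y\<in>nbrs V E x. v x - v y) - (\<Sum>y\<in>nbrs V E x. w x - w y)"
        by (simp add: sum_subtractf[symmetric] algebra_simps)
      ultimately show "(\<Sum>y\<in>nbrs V E x. (v x - w x) - (v y - w y)) = 0" by simp
    qed
  qed
  have h2: "\<forall>x\<in>V. (\<lambda>x. w x - v x) x \<le> 0"
  proof (rule max_principle[OF fin rs adj])
    show "w r - v r = 0" "w s - v s = 0" using v w by (auto simp: is_voltage_def)
    show "\<forall>x\<in>V-{r,s}. (\<Sum>y\<in>nbrs V E x. (w x - v x) - (w y - v y)) = 0"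
    proof
      fix x assume "x \<in> V-{r,s}"
      hence "(\<Sum>y\<in>nbrs V E x. v x - v y) = 0" "(\<Sum>y\<in>nbrs V E x. w x - w y) = 0"
        using v w unfolding is_voltage_def by blast+
      moreover have "(\<Sum>y\<in>nbrs V E x. (w x - v x) - (w y - v y)) = (\<Sum>y\<in>nbrs V E x. w x - w y) - (\<Sum>y\<in>nbrs V E x. v x - v y)"
        by (simp add: sum_subtractf[symmetric] algebra_simps)
      ultimately show "(\<Sum>y\<in>nbrs V E x. (w x - v x) - (w y - v y)) = 0" by simp
    qed
  qed
  show ?thesis
  proof
    fix x show "v x = w x"
    proof (cases "x \<in> V")
      case True thus ?thesis using h1 h2 by force
    next
      case False thus ?thesis using v w by (simp add: is_voltage_def)
    qed
  qed
qed


definition vv :: "nat \<Rightarrow> nat set \<Rightarrow> nat \<Rightarrow> nat \<Rightarrow> real \<Rightarrow> real \<Rightarrow> nat \<Rightarrow> real" where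
  "vv n e r s a b x = (if x = r then 1 else if x = s then 0 else if x < n then (if x \<in> e then a else b) else 0)"

lemma sum_vv_V:
  assumes rs: "r < n" "s < n" "r \<noteq> s" and e: "e \<subseteq> {..<n}" "finite e"
  shows "(\<Sum>x\<in>{..<n}. vv n e r s a b x) = 1 + real (card (e - {r,s})) * a + (real n - 2 - real (card (e - {r,s}))) * b"
proof -
  let ?V = "{..<n::nat}"
  have split: "?V = {r,s} \<union> (?V - {r,s})" using rs by auto
  have "(\<Sum>x\<in>?V. vv n e r s a b x) = (\<Sum>x\<in>{r,s}. vv n e r s a b x) + (\<Sum>x\<in>?V - {r,s}. vv n e r s a b x)"
    by (subst split, rule sum.union_disjoint) auto
  also have "(\<Sum>x\<in>{r,s}. vv n e r s a b x) = 1" using rs by (simp add: vv_def)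
  also have "(\<Sum>x\<in>?V - {r,s}. vv n e r s a b x) = (\<Sum>x\<in>?V - {r,s}. if x \<in> e then a else b)"
    by (rule sum.cong) (auto simp: vv_def)
  also have "\<dots> = (\<Sum>x\<in>(?V - {r,s}) \<inter> {x. x \<in> e}. a) + (\<Sum>x\<in>(?V - {r,s}) \<inter> - {x. x \<in> e}. b)"
    by (rule sum.If_cases) simp
  also have "(?V - {r,s}) \<inter> {x. x \<in> e} = e - {r,s}" using e by auto
  also have "(?V - {r,s}) \<inter> - {x. x \<in> e} = ?V - ({r,s} \<union> (e - {r,s}))" by auto
  finally have S: "(\<Sum>x\<in>?V. vv n e r s a b x) = 1 + ((\<Sum>x\<in>e - {r,s}. a) + (\<Sum>x\<in>?V - ({r,s} \<union> (e - {r,s})). b))" .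
  have c1: "card ({r,s} \<union> (e - {r,s})) = 2 + card (e - {r,s})"
    using rs e by (subst card_Un_disjoint) auto
  have sub: "{r,s} \<union> (e - {r,s}) \<subseteq> ?V" using rs e by auto
  have fin: "finite ({r,s} \<union> (e - {r,s}))" using e by simp
  have c2: "card (?V - ({r,s} \<union> (e - {r,s}))) = n - (2 + card (e - {r,s}))"
    using card_Diff_subset[OF fin sub] c1 by simp
  have le: "2 + card (e - {r,s}) \<le> n" using card_mono[OF _ sub] c1 by simp
  have "real (n - (2 + card (e - {r,s}))) = real n - 2 - real (card (e - {r,s}))" using le by simp
  thus ?thesis using S c2 by simp
qed

lemma sum_vv_e:
  assumes rs: "r \<noteq> s" and e: "e \<subseteq> {..<n}" "finite e"
  shows "(\<Sum>x\<in>e. vv n e r s a b x) = (if r \<in> e then 1 else 0) + real (card (e - {r,s})) * a"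
proof -
  have split: "e = (e \<inter> {r,s}) \<union> (e - {r,s})" by auto
  have "(\<Sum>x\<in>e. vv n e r s a b x) = (\<Sum>x\<in>e \<inter> {r,s}. vv n e r s a b x) + (\<Sum>x\<in>e - {r,s}. vv n e r s a b x)"
    by (subst split, rule sum.union_disjoint) (use e in auto)
  also have "(\<Sum>x\<in>e - {r,s}. vv n e r s a b x) = (\<Sum>x\<in>e - {r,s}. a)"
    by (rule sum.cong) (use e in \<open>auto simp: vv_def\<close>)
  also have "(\<Sum>x\<in>e \<inter> {r,s}. vv n e r s a b x) = (if r \<in> e then 1 else 0)"
  proof -
    consider "r \<in> e" "s \<in> e" | "r \<in> e" "s \<notin> e" | "r \<notin> e" "s \<in> e" | "r \<notin> e" "s \<notin> e" by blast
    thus ?thesis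
    proof cases
      case 1 hence "e \<inter> {r,s} = {r,s}" by auto thus ?thesis using 1 rs by (simp add: vv_def)
    next
      case 2 hence "e \<inter> {r,s} = {r}" by auto thus ?thesis using 2 rs by (simp add: vv_def)
    next
      case 3 hence "e \<inter> {r,s} = {s}" by auto thus ?thesis using 3 rs by (simp add: vv_def)
    next
      case 4 hence "e \<inter> {r,s} = {}" by auto thus ?thesis using 4 rs by (simp add: vv_def)
    qed
  qed
  finally show ?thesis by simp
qed

lemma sum_diff_const:
  fixes f :: "'a \<Rightarrow> real"
  assumes "finite V" "A \<subseteq> V"
  shows "(\<Sum>y\<in>V - A. c - f y) = real (card V - card A) * c - (sum f V - sum f A)"
proof -
  have "finite A" using assms finite_subset by blast
  thus ?thesis using assms by (simp add: sum_subtractf sum_diff card_Diff_subset)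
qed


definition Rk :: "nat \<Rightarrow> nat \<Rightarrow> real" where
  "Rk n k = (if k = 2 then 2/(real n - 2) else if k = 1 then (2*real n - 3)/(real n*(real n - 2)) else 2/real n)"

definition al :: "nat \<Rightarrow> nat set \<Rightarrow> nat \<Rightarrow> nat \<Rightarrow> real" where
  "al n e r s = (if r \<in> e \<and> s \<notin> e then (real n - 3)/(2*real n - 3) else if s \<in> e \<and> r \<notin> e then real n/(2*real n - 3) else 1/2)"

definition be :: "nat \<Rightarrow> nat set \<Rightarrow> nat \<Rightarrow> nat \<Rightarrow> real" where
  "be n e r s = (if r \<in> e \<and> s \<notin> e then (real n - 2)/(2*real n - 3) else if s \<in> e \<and> r \<notin> e then (real n - 1)/(2*real n - 3) else 1/2)"

lemma kn_alg: fixes x D :: real assumes "x \<ge> 4" "D = 2*x-3" shows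
 "(x-1)*((x-2)/D) - ((1+(x-3)/D+(x-3)*((x-2)/D)) - (x-2)/D) = 0"
 "1/(x-2-((1+(x-3)/D+(x-3)*((x-2)/D)) - (1 + (x-3)/D))) = D/(x*(x-2))"
 "(x-2)*(x/D) - ((1+x/D+(x-3)*((x-1)/D)) - x/D) = 0"
 "(x-1)*((x-1)/D) - ((1+x/D+(x-3)*((x-1)/D)) - (x-1)/D) = 0"
 "1/(x-1-((1+x/D+(x-3)*((x-1)/D)) - 1)) = D/(x*(x-2))"
proof -
  have D: "D \<noteq> 0" "x - 2 \<noteq> 0" "x \<noteq> 0" using assms by auto
  show "(x-1)*((x-2)/D) - ((1+(x-3)/D+(x-3)*((x-2)/D)) - (x-2)/D) = 0"
    using D(1) by (simp add: field_simps; simp add: assms(2) algebra_simps)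
  have "x-2-((1+(x-3)/D+(x-3)*((x-2)/D)) - (1 + (x-3)/D)) = x*(x-2)/D"
    using D(1) by (simp add: field_simps; simp add: assms(2) algebra_simps)
  thus "1/(x-2-((1+(x-3)/D+(x-3)*((x-2)/D)) - (1 + (x-3)/D))) = D/(x*(x-2))" by simp
  show "(x-2)*(x/D) - ((1+x/D+(x-3)*((x-1)/D)) - x/D) = 0"
    using D(1) by (simp add: field_simps; simp add: assms(2) algebra_simps)
  show "(x-1)*((x-1)/D) - ((1+x/D+(x-3)*((x-1)/D)) - (x-1)/D) = 0"
    using D(1) by (simp add: field_simps; simp add: assms(2) algebra_simps)
  have "x-1-((1+x/D+(x-3)*((x-1)/D)) - 1) = x*(x-2)/D"
    using D(1) by (simp add: field_simps; simp add: assms(2) algebra_simps)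
  thus "1/(x-1-((1+x/D+(x-3)*((x-1)/D)) - 1)) = D/(x*(x-2))" by simp
qed

lemma eff_res_Kn:
  assumes n: "n \<ge> 4" and e: "e \<in> complete_edges n" and rs: "r < n" "s < n" "r \<noteq> s"
  shows "eff_res {..<n} (complete_edges n - {e}) r s = Rk n (card ({r,s} \<inter> e))"
proof -
  obtain a b where ab: "e = {a,b}" "a < n" "b < n" "a \<noteq> b" using e by (auto simp: complete_edges_def)
  let ?V = "{..<n}" let ?E = "complete_edges n - {e}"
  have eV: "e \<subseteq> ?V" "finite e" "card e = 2" using ab by auto
  have nb: "\<And>x. x < n \<Longrightarrow> nbrs ?V ?E x = ?V - (if x \<in> e then e else {x})" using nbrs_Kn_minus[OF e] by blast
  define \<alpha> where "\<alpha> = al n e r s"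
  define \<beta> where "\<beta> = be n e r s"
  define v where "v = vv n e r s \<alpha> \<beta>"
  define c where "c = card (e - {r,s})"
  define k where "k = card ({r,s} \<inter> e)"
  define Tot where "Tot = 1 + real c * \<alpha> + (real n - 2 - real c) * \<beta>"
  define Se where "Se = (if r \<in> e then 1 else 0) + real c * \<alpha>"
  have sumV: "sum v ?V = Tot" unfolding v_def Tot_def c_def using sum_vv_V[OF rs eV(1,2)] by simp
  have sume: "sum v e = Se" unfolding v_def Se_def c_def using sum_vv_e[OF rs(3) eV(1,2)] by simp
  have harm_gen: "(\<Sum>y\<in>nbrs ?V ?E x. v x - v y) = (if x \<in> e then real (n - 2) * v x - (Tot - Se) else real (n - 1) * v x - (Tot - v x))"
    if x: "x < n" for x
  proof (cases "x \<in> e")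
    case True
    have "(\<Sum>y\<in>nbrs ?V ?E x. v x - v y) = (\<Sum>y\<in>?V - e. v x - v y)" using nb[OF x] True by simp
    also have "\<dots> = real (card ?V - card e) * v x - (sum v ?V - sum v e)" by (rule sum_diff_const) (use eV in auto)
    finally show ?thesis using True sumV sume eV by simp
  next
    case False
    have "(\<Sum>y\<in>nbrs ?V ?E x. v x - v y) = (\<Sum>y\<in>?V - {x}. v x - v y)" using nb[OF x] False by simp
    also have "\<dots> = real (card ?V - card {x}) * v x - (sum v ?V - sum v {x})" by (rule sum_diff_const) (use x in auto)
    finally show ?thesis using False sumV by simp
  qed
  have vx: "v x = (if x \<in> e then \<alpha> else \<beta>)" if "x < n" "x \<noteq> r" "x \<noteq> s" for x
    using that by (simp add: v_def vv_def)
  have vr: "v r = 1" "v s = 0" using rs by (auto simp: v_def vv_def)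
  have nR: "real n \<ge> 4" using n by simp
  have d1: "2 * real n - 3 \<noteq> 0" "real n - 2 \<noteq> 0" "real n \<noteq> 0" using nR by auto
  have net_gen: "(\<Sum>y\<in>nbrs ?V ?E r. v r - v y) = (if r \<in> e then real (n - 2) - (Tot - Se) else real (n - 1) - (Tot - 1))"
    using harm_gen[OF rs(1)] vr by simp
  have ck: "c + k = 2"
  proof -
    have "card (e - {r,s}) = card e - card (e \<inter> {r,s})" by (rule card_Diff_subset_Int) (use eV in auto)
    moreover have "card (e \<inter> {r,s}) \<le> card e" by (rule card_mono) (use eV in auto)
    ultimately show ?thesis unfolding c_def k_def using eV by (simp add: Int_commute)
  qed
  have adj: "\<forall>x\<in>?V-{r,s}. nbrs ?V ?E x \<inter> {r,s} \<noteq> {}"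
  proof
    fix x assume x: "x \<in> ?V - {r,s}"
    show "nbrs ?V ?E x \<inter> {r,s} \<noteq> {}"
    proof (cases "x \<in> e")
      case True
      have "\<not> (r \<in> e \<and> s \<in> e)"
      proof
        assume "r \<in> e \<and> s \<in> e"
        hence "{x,r,s} \<subseteq> e" using True by auto
        hence "card {x,r,s} \<le> card e" using eV by (intro card_mono) auto
        thus False using x rs eV by auto
      qed
      thus ?thesis using nb[of x] x True rs by auto
    next
      case False thus ?thesis using nb[of x] x rs by auto
    qed
  qed
  have main: "is_voltage ?V ?E r s v \<and> 1 / (\<Sum>y\<in>nbrs ?V ?E r. v r - v y) = Rk n k"
  proof -
    have hx: "(\<forall>x\<in>?V - {r,s}. (\<Sum>y\<in>nbrs ?V ?E x. v x - v y) = 0)"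
      if h1: "\<forall>x. x < n \<longrightarrow> x \<noteq> r \<longrightarrow> x \<noteq> s \<longrightarrow> x \<in> e \<longrightarrow> real (n - 2) * \<alpha> - (Tot - Se) = 0"
      and h2: "real (n - 1) * \<beta> - (Tot - \<beta>) = 0"
    proof
      fix x assume x: "x \<in> ?V - {r,s}"
      show "(\<Sum>y\<in>nbrs ?V ?E x. v x - v y) = 0"
      proof (cases "x \<in> e")
        case True thus ?thesis using harm_gen[of x] vx[of x] x h1[rule_format, of x] by simp
      next
        case False thus ?thesis using harm_gen[of x] vx[of x] x h2 by simp
      qed
    qed
    have iv: "is_voltage ?V ?E r s v" if "\<forall>x\<in>?V - {r,s}. (\<Sum>y\<in>nbrs ?V ?E x. v x - v y) = 0"
      using that vr rs by (auto simp: is_voltage_def v_def vv_def)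
    consider "r \<in> e" "s \<in> e" | "r \<in> e" "s \<notin> e" | "r \<notin> e" "s \<in> e" | "r \<notin> e" "s \<notin> e" by blast
    thus ?thesis
    proof cases
      case 1
      have "{r,s} \<subseteq> e" using 1 by auto
      hence ee: "e = {r,s}" using eV rs by (intro card_subset_eq[symmetric]) auto
      have cv: "c = 0" "k = 2" using ee rs by (auto simp: c_def k_def)
      have ab: "\<alpha> = 1/2" "\<beta> = 1/2" using 1 by (auto simp: \<alpha>_def \<beta>_def al_def be_def)
      have T: "Tot = real n / 2" "Se = 1" using 1 by (auto simp: Tot_def Se_def cv ab field_simps)
      have rn2: "real (n - 2) = real n - 2" "real (n - 1) = real n - 1" using n by auto
      have E2: "real (n - 1) * \<beta> - (Tot - \<beta>) = 0" unfolding T ab rn2 by (simp add: field_simps)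
      have "is_voltage ?V ?E r s v"
        by (rule iv, rule hx) (use E2 ee in auto)
      moreover have "1 / (\<Sum>y\<in>nbrs ?V ?E r. v r - v y) = 1 / (real n - 2 - (Tot - Se))"
        using net_gen 1 rn2 by simp
      moreover have "1 / (real n - 2 - (Tot - Se)) = Rk n k" unfolding T cv Rk_def using d1 by (simp add: field_simps)
      ultimately show ?thesis by simp
    next
      case 2
      have cv: "c = 1" "k = 1"
      proof -
        have "{r,s} \<inter> e = {r}" using 2 by auto
        thus "k = 1" by (simp add: k_def)
        thus "c = 1" using ck by simp
      qed
      have ab: "\<alpha> = (real n - 3)/(2*real n - 3)" "\<beta> = (real n - 2)/(2*real n - 3)" using 2 by (auto simp: \<alpha>_def \<beta>_def al_def be_def)
      have T: "Tot = 1 + \<alpha> + (real n - 3) * \<beta>" "Se = 1 + \<alpha>" using cv 2 by (auto simp: Tot_def Se_def)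
      have rn2: "real (n - 2) = real n - 2" "real (n - 1) = real n - 1" using n by auto
      have E1: "real (n - 2) * \<alpha> - (Tot - Se) = 0" unfolding T ab rn2 by (simp add: algebra_simps)
      have E2: "real (n - 1) * \<beta> - (Tot - \<beta>) = 0" unfolding T ab rn2 by (rule kn_alg(1)) (use nR in auto)
      have "is_voltage ?V ?E r s v"
        by (rule iv, rule hx) (use E1 E2 in auto)
      moreover have "1 / (\<Sum>y\<in>nbrs ?V ?E r. v r - v y) = 1 / (real n - 2 - (Tot - Se))"
        using net_gen 2 rn2 by simp
      moreover have "1 / (real n - 2 - (Tot - Se)) = Rk n k" unfolding T cv ab Rk_def using kn_alg(2)[OF nR refl] by simp
      ultimately show ?thesis by simp
    next
      case 3
      have cv: "c = 1" "k = 1"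
      proof -
        have "{r,s} \<inter> e = {s}" using 3 by auto
        thus "k = 1" by (simp add: k_def)
        thus "c = 1" using ck by simp
      qed
      have ab: "\<alpha> = real n/(2*real n - 3)" "\<beta> = (real n - 1)/(2*real n - 3)" using 3 by (auto simp: \<alpha>_def \<beta>_def al_def be_def)
      have T: "Tot = 1 + \<alpha> + (real n - 3) * \<beta>" "Se = \<alpha>" using cv 3 by (auto simp: Tot_def Se_def)
      have rn2: "real (n - 2) = real n - 2" "real (n - 1) = real n - 1" using n by auto
      have E1: "real (n - 2) * \<alpha> - (Tot - Se) = 0" unfolding T ab rn2 by (rule kn_alg(3)) (use nR in auto)
      have E2: "real (n - 1) * \<beta> - (Tot - \<beta>) = 0" unfolding T ab rn2 by (rule kn_alg(4)) (use nR in auto)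
      have "is_voltage ?V ?E r s v"
        by (rule iv, rule hx) (use E1 E2 in auto)
      moreover have "1 / (\<Sum>y\<in>nbrs ?V ?E r. v r - v y) = 1 / (real n - 1 - (Tot - 1))"
        using net_gen 3 rn2 by simp
      moreover have "1 / (real n - 1 - (Tot - 1)) = Rk n k" unfolding T cv ab Rk_def using kn_alg(5)[OF nR refl] by simp
      ultimately show ?thesis by simp
    next
      case 4
      have cv: "c = 2" "k = 0"
      proof -
        have "{r,s} \<inter> e = {}" using 4 by auto
        thus "k = 0" by (simp add: k_def)
        thus "c = 2" using ck by simp
      qed
      have ab: "\<alpha> = 1/2" "\<beta> = 1/2" using 4 by (auto simp: \<alpha>_def \<beta>_def al_def be_def)
      have T: "Tot = real n / 2" "Se = 1" using 4 by (auto simp: Tot_def Se_def cv ab field_simps)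
      have rn2: "real (n - 2) = real n - 2" "real (n - 1) = real n - 1" using n by auto
      have E1: "real (n - 2) * \<alpha> - (Tot - Se) = 0" unfolding T ab rn2 using d1 by (simp add: field_simps)
      have E2: "real (n - 1) * \<beta> - (Tot - \<beta>) = 0" unfolding T ab rn2 using d1 by (simp add: field_simps)
      have "is_voltage ?V ?E r s v"
        by (rule iv, rule hx) (use E1 E2 in auto)
      moreover have "1 / (\<Sum>y\<in>nbrs ?V ?E r. v r - v y) = 1 / (real n - 1 - (Tot - 1))"
        using net_gen 4 rn2 by simp
      moreover have "1 / (real n - 1 - (Tot - 1)) = Rk n k" unfolding T cv Rk_def using d1 by (simp add: field_simps)
      ultimately show ?thesis by simp
    qed
  qed
  have "(THE w. is_voltage ?V ?E r s w) = v"
  proof (rule the_equality)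
    show "is_voltage ?V ?E r s v" using main by blast
    fix w assume w: "is_voltage ?V ?E r s w"
    show "w = v" by (rule voltage_unique[OF _ _ _ adj w]) (use rs main in auto)
  qed
  thus ?thesis using main unfolding eff_res_def net_current_def Let_def k_def by simp
qed



lemma CE_iff: "p \<in> complete_edges n \<longleftrightarrow> (\<exists>x y. p = {x,y} \<and> x < n \<and> y < n \<and> x \<noteq> y)"
  by (auto simp: complete_edges_def)

lemma CE_card: assumes "p \<in> complete_edges n" shows "finite p" "card p = 2" "p \<subseteq> {..<n}"
  using assms by (auto simp: complete_edges_def)

lemma CE_other: assumes "p \<in> complete_edges n" "x \<in> p" shows "\<exists>y. p = {x,y} \<and> y \<noteq> x \<and> y < n \<and> x < n"
  using assms by (auto simp: complete_edges_def)

lemma CE_eq: assumes "p \<in> complete_edges n" "x \<in> p" "y \<in> p" "x \<noteq> y" shows "p = {x,y}"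
  using assms by (auto simp: complete_edges_def)

lemma two_sets:
  assumes "p \<in> complete_edges n" "e \<in> complete_edges n"
  shows "card (p \<inter> e) = 2 \<longleftrightarrow> p = e" and "card (p \<inter> e) = 0 \<longleftrightarrow> p \<inter> e = {}"
proof -
  have fp: "finite p" "card p = 2" "finite e" "card e = 2" using CE_card assms by blast+
  show "card (p \<inter> e) = 2 \<longleftrightarrow> p = e"
  proof
    assume h: "card (p \<inter> e) = 2"
    have "p \<inter> e = p" by (rule card_subset_eq) (use fp h in auto)
    moreover have "p \<inter> e = e" by (rule card_subset_eq) (use fp h in auto)
    ultimately show "p = e" by simp
  qed (use fp in simp)
  show "card (p \<inter> e) = 0 \<longleftrightarrow> p \<inter> e = {}" using fp by simp
qed

definition sig_eq :: "nat set set \<Rightarrow> nat set \<Rightarrow> nat set \<Rightarrow> bool" where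
  "sig_eq S e e' \<longleftrightarrow> (\<forall>p\<in>S. card (p \<inter> e) = card (p \<inter> e'))"

locale starf =
  fixes n :: nat and c :: "nat \<Rightarrow> nat"
  assumes c_lt: "\<And>x. x < n \<Longrightarrow> c x < n"
    and c_idem: "\<And>x. x < n \<Longrightarrow> c (c x) = c x"
    and c_two: "\<And>x. x < n \<Longrightarrow> \<exists>y1 y2. y1 < n \<and> y2 < n \<and> y1 \<noteq> y2 \<and> c y1 = c x \<and> c y2 = c x \<and> c y1 \<noteq> y1 \<and> c y2 \<noteq> y2"
begin

definition SS :: "nat set set" where "SS = {{x, c x} | x. x < n \<and> c x \<noteq> x}"

lemma SS_CE: "SS \<subseteq> complete_edges n"
  using c_lt by (auto simp: SS_def complete_edges_def)

lemma meets:
  assumes "sig_eq SS e e'" "p \<in> SS" "e \<in> complete_edges n" "e' \<in> complete_edges n"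
  shows "p \<inter> e = {} \<longleftrightarrow> p \<inter> e' = {}"
proof -
  have p: "p \<in> complete_edges n" using assms(2) SS_CE by blast
  have "card (p \<inter> e) = card (p \<inter> e')" using assms(1,2) unfolding sig_eq_def by blast
  thus ?thesis using two_sets(2)[OF p assms(3)] two_sets(2)[OF p assms(4)] by simp
qed

lemma same_in:
  assumes "sig_eq SS e e'" "e \<in> SS" "e \<in> complete_edges n" "e' \<in> complete_edges n"
  shows "e = e'"
proof -
  have p: "e \<in> complete_edges n" using assms(2) SS_CE by blast
  have "card (e \<inter> e) = card (e \<inter> e')" using assms(1,2) unfolding sig_eq_def by blast
  thus ?thesis using two_sets(1)[OF p assms(3)] two_sets(1)[OF p assms(4)] by simp
qed

lemma center_case:
  assumes sg: "sig_eq SS e1 e2" and e1: "e1 \<in> complete_edges n" "e1 \<notin> SS"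
    and e2: "e2 \<in> complete_edges n" "e2 \<notin> SS"
    and x: "x \<in> e2" "x \<notin> e1" "x < n" "c x = x"
  shows False
proof -
  obtain y1 y2 where y: "y1 < n" "y2 < n" "y1 \<noteq> y2" "c y1 = x" "c y2 = x" "c y1 \<noteq> y1" "c y2 \<noteq> y2"
    using c_two[OF x(3)] x(4) by auto
  have "{y1, c y1} \<in> SS" unfolding SS_def using y by blast
  hence q1: "{y1, x} \<in> SS" using y by simp
  have "{y2, c y2} \<in> SS" unfolding SS_def using y by blast
  hence q2: "{y2, x} \<in> SS" using y by simp
  have "{y1, x} \<inter> e1 \<noteq> {}" using meets[OF sg q1 e1(1) e2(1)] x by auto
  hence y1e: "y1 \<in> e1" using x by auto
  have "{y2, x} \<inter> e1 \<noteq> {}" using meets[OF sg q2 e1(1) e2(1)] x by auto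
  hence y2e: "y2 \<in> e1" using x by auto
  have e1eq: "e1 = {y1, y2}" using CE_eq[OF e1(1) y1e y2e y(3)] .
  obtain x' where x': "e2 = {x, x'}" "x' \<noteq> x" "x' < n" using CE_other[OF e2(1) x(1)] by auto
  have "x' \<noteq> y1" using e2(2) q1 x' by (auto simp: insert_commute)
  moreover have "x' \<noteq> y2" using e2(2) q2 x' by (auto simp: insert_commute)
  ultimately have x'n: "x' \<notin> e1" using e1eq by auto
  show False
  proof (cases "c x' = x'")
    case True
    obtain z where z: "z < n" "c z = x'" "c z \<noteq> z" using c_two[OF x'(3)] True by auto
    have "{z, c z} \<in> SS" unfolding SS_def using z by blast
    hence qz: "{z, x'} \<in> SS" using z by simp
    have "{z, x'} \<inter> e1 \<noteq> {}" using meets[OF sg qz e1(1) e2(1)] x' by auto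
    hence "z \<in> e1" using x'n by auto
    hence "c z = x" using e1eq y by auto
    thus False using z x' by simp
  next
    case False
    have qz: "{x', c x'} \<in> SS" using False x' unfolding SS_def by auto
    have "{x', c x'} \<inter> e1 \<noteq> {}" using meets[OF sg qz e1(1) e2(1)] x' by auto
    hence "c x' \<in> e1" using x'n by auto
    hence "c x' = y1 \<or> c x' = y2" using e1eq by auto
    thus False using c_idem[OF x'(3)] y by auto
  qed
qed

lemma card_SS: "card SS = card {x. x < n \<and> c x \<noteq> x}"
proof -
  have "SS = (\<lambda>x. {x, c x}) ` {x. x < n \<and> c x \<noteq> x}" unfolding SS_def by auto
  moreover have "inj_on (\<lambda>x. {x, c x}) {x. x < n \<and> c x \<noteq> x}"
  proof (rule inj_onI)
    fix x y assume x: "x \<in> {x. x < n \<and> c x \<noteq> x}" and y: "y \<in> {x. x < n \<and> c x \<noteq> x}"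
      and eq: "{x, c x} = {y, c y}"
    show "x = y"
    proof (rule ccontr)
      assume "x \<noteq> y"
      hence "x = c y" "c x = y" using eq by (auto simp: doubleton_eq_iff)
      hence "c x = x" using c_idem y by auto
      thus False using x by simp
    qed
  qed
  ultimately show ?thesis by (simp add: card_image)
qed

lemma sig_sym: "sig_eq S e e' \<Longrightarrow> sig_eq S e' e" by (simp add: sig_eq_def)

lemma injective:
  assumes sg: "sig_eq SS e e'" and e: "e \<in> complete_edges n" and e': "e' \<in> complete_edges n"
  shows "e = e'"
proof (rule ccontr)
  assume ne: "e \<noteq> e'"
  have nS: "e \<notin> SS" using same_in[OF sg _ e e'] ne by blast
  have nS': "e' \<notin> SS" using same_in[OF sig_sym[OF sg] _ e' e] ne by blast
  have "\<not> e' \<subseteq> e"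
  proof
    assume "e' \<subseteq> e"
    hence "e' = e" using CE_card[OF e] CE_card[OF e'] by (intro card_subset_eq) auto
    thus False using ne by simp
  qed
  then obtain x where x: "x \<in> e'" "x \<notin> e" by auto
  have xn: "x < n" using CE_card(3)[OF e'] x by auto
  show False
  proof (cases "c x = x")
    case True thus False using center_case[OF sg e nS e' nS' x xn] by simp
  next
    case False
    have q: "{x, c x} \<in> SS" using False xn unfolding SS_def by auto
    have "{x, c x} \<inter> e \<noteq> {}" using meets[OF sg q e e'] x by auto
    hence cxe: "c x \<in> e" using x by auto
    have "c x \<notin> e'"
    proof
      assume "c x \<in> e'"
      hence "e' = {x, c x}" using CE_eq[OF e' x(1)] False by auto
      thus False using q nS' by simp
    qed
    thus False using center_case[OF sig_sym[OF sg] e' nS' e nS cxe _ c_lt[OF xn] c_idem[OF xn]] by simp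
  qed
qed

end


definition cen :: "nat \<Rightarrow> nat \<Rightarrow> nat" where
  "cen n x = 3 * min (x div 3) (n div 3 - 1) + 1"

lemma cen_starf: assumes "n \<ge> 6" shows "starf n (cen n)"
proof -
  have m: "3 * (n div 3) \<le> n" "n div 3 \<ge> 2" using assms by auto
  have lt: "cen n x < n" for x unfolding cen_def using m by (auto simp: min_def)
  have idem: "cen n (cen n x) = cen n x" for x
  proof -
    define j where "j = min (x div 3) (n div 3 - 1)"
    have j: "j \<le> n div 3 - 1" unfolding j_def by simp
    have d1: "(3*j+1) div 3 = j" by presburger
    have "cen n x = 3*j+1" unfolding cen_def j_def by simp
    thus ?thesis unfolding cen_def d1 using j by (simp add: min_absorb1 d1)
  qed
  show ?thesis
  proof
    fix x assume x: "x < n"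
    show "cen n x < n" by (rule lt)
    show "cen n (cen n x) = cen n x" by (rule idem)
    define j where "j = min (x div 3) (n div 3 - 1)"
    have j: "j \<le> n div 3 - 1" unfolding j_def by simp
    have cx: "cen n x = 3*j+1" unfolding cen_def j_def by simp
    have d0: "(3*j) div 3 = j" by presburger
    have d2: "(3*j+2) div 3 = j" by presburger
    have c0: "cen n (3*j) = cen n x" unfolding cx unfolding cen_def d0 using j by (simp add: min_absorb1)
    have c2: "cen n (3*j+2) = cen n x" unfolding cx unfolding cen_def d2 using j by (simp add: min_absorb1)
    have "3*j+2 < n" using j m by linarith
    thus "\<exists>y1 y2. y1 < n \<and> y2 < n \<and> y1 \<noteq> y2 \<and> cen n y1 = cen n x \<and> cen n y2 = cen n x \<and> cen n y1 \<noteq> y1 \<and> cen n y2 \<noteq> y2"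
      using c0 c2 cx by (intro exI[of _ "3*j"] exI[of _ "3*j+2"]) auto
  qed
qed

lemma cen_card: assumes "n \<ge> 6" shows "card {x. x < n \<and> cen n x \<noteq> x} = n - n div 3"
proof -
  have m: "3 * (n div 3) \<le> n" "n div 3 \<ge> 2" using assms by auto
  have C: "{x. x < n \<and> cen n x = x} = (\<lambda>j. 3*j+1) ` {..<n div 3}"
  proof (intro set_eqI iffI)
    fix x assume "x \<in> {x. x < n \<and> cen n x = x}"
    hence "x = 3 * min (x div 3) (n div 3 - 1) + 1" unfolding cen_def by simp
    moreover have "min (x div 3) (n div 3 - 1) < n div 3" using m by simp
    ultimately show "x \<in> (\<lambda>j. 3*j+1) ` {..<n div 3}" by (metis image_eqI lessThan_iff)
  next
    fix x assume "x \<in> (\<lambda>j. 3*j+1) ` {..<n div 3}"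
    then obtain j where j: "j < n div 3" "x = 3*j+1" by auto
    have "x < n" using j m by linarith
    moreover have "cen n x = x"
    proof -
      have d1: "(3*j+1) div 3 = j" by presburger
      show ?thesis unfolding cen_def j(2) d1 using j(1) by (simp add: min_absorb1)
    qed
    ultimately show "x \<in> {x. x < n \<and> cen n x = x}" by simp
  qed
  have cC: "card {x. x < n \<and> cen n x = x} = n div 3"
    unfolding C by (subst card_image) (auto simp: inj_on_def)
  have "{x. x < n \<and> cen n x \<noteq> x} = {..<n} - {x. x < n \<and> cen n x = x}" by auto
  moreover have "card ({..<n} - {x. x < n \<and> cen n x = x}) = n - card {x. x < n \<and> cen n x = x}"
    by (subst card_Diff_subset) auto
  ultimately show ?thesis using cC by simp
qed


lemma finite_CE: "finite (complete_edges n)"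
proof -
  have "complete_edges n \<subseteq> Pow {..<n}" by (auto simp: complete_edges_def)
  thus ?thesis by (rule finite_subset) simp
qed

definition dg :: "nat set set \<Rightarrow> nat \<Rightarrow> nat" where "dg S x = card {p\<in>S. x \<in> p}"

definition good :: "nat \<Rightarrow> nat set set \<Rightarrow> bool" where
  "good n S \<longleftrightarrow> S \<subseteq> complete_edges n \<and> (\<forall>e\<in>complete_edges n. \<forall>e'\<in>complete_edges n. e \<noteq> e' \<longrightarrow> \<not> sig_eq S e e')"

lemma good_sig: "good n S \<Longrightarrow> e \<in> complete_edges n \<Longrightarrow> e' \<in> complete_edges n \<Longrightarrow> sig_eq S e e' \<Longrightarrow> e = e'"
  unfolding good_def by metis

lemma good_fin: "good n S \<Longrightarrow> finite S"
  unfolding good_def using finite_CE finite_subset by blast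

lemma third: fixes x y :: nat assumes "n \<ge> 3" shows "\<exists>w<n. w \<noteq> x \<and> w \<noteq> y"
proof -
  have "\<exists>w\<in>{0,1,2::nat}. w \<noteq> x \<and> w \<noteq> y" by auto
  then obtain w where w: "w \<in> {0,1,2::nat}" "w \<noteq> x" "w \<noteq> y" by blast
  have "w < n" using w(1) assms by auto
  thus ?thesis using w by blast
qed

lemma no_two_iso:
  assumes g: "good n S" and n: "n \<ge> 3" and xy: "x < n" "y < n" "x \<noteq> y"
    and ix: "\<forall>p\<in>S. x \<notin> p" and iy: "\<forall>p\<in>S. y \<notin> p"
  shows False
proof -
  obtain w where w: "w < n" "w \<noteq> x" "w \<noteq> y" using third[OF n] by blast
  have e: "{x,w} \<in> complete_edges n" "{y,w} \<in> complete_edges n" using xy w by (auto simp: complete_edges_def)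
  have ne: "{x,w} \<noteq> {y,w}" using xy w by (auto simp: doubleton_eq_iff)
  have "sig_eq S {x,w} {y,w}" unfolding sig_eq_def
  proof
    fix p assume "p \<in> S"
    hence "p \<inter> {x,w} = p \<inter> {y,w}" using ix iy by auto
    thus "card (p \<inter> {x,w}) = card (p \<inter> {y,w})" by simp
  qed
  thus False using good_sig[OF g e] ne by blast
qed

lemma no_leafpair:
  assumes g: "good n S" and n: "n \<ge> 3" and xy: "{x,y} \<in> S" "x \<noteq> y"
    and lx: "\<forall>p\<in>S. x \<in> p \<longrightarrow> p = {x,y}" and ly: "\<forall>p\<in>S. y \<in> p \<longrightarrow> p = {x,y}"
  shows False
proof -
  have xyn: "x < n" "y < n" using g xy unfolding good_def complete_edges_def by (auto simp: doubleton_eq_iff)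
  obtain w where w: "w < n" "w \<noteq> x" "w \<noteq> y" using third[OF n] by blast
  have e: "{x,w} \<in> complete_edges n" "{y,w} \<in> complete_edges n" using xyn w by (auto simp: complete_edges_def)
  have ne: "{x,w} \<noteq> {y,w}" using xy w by (auto simp: doubleton_eq_iff)
  have "sig_eq S {x,w} {y,w}" unfolding sig_eq_def
  proof
    fix p assume p: "p \<in> S"
    show "card (p \<inter> {x,w}) = card (p \<inter> {y,w})"
    proof (cases "p = {x,y}")
      case True
      hence "p \<inter> {x,w} = {x}" "p \<inter> {y,w} = {y}" using w xy by auto
      thus ?thesis by simp
    next
      case False
      hence "x \<notin> p" "y \<notin> p" using lx ly p by auto
      hence "p \<inter> {x,w} = p \<inter> {y,w}" by auto
      thus ?thesis by simp
    qed
  qed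
  thus False using good_sig[OF g e] ne by blast
qed

lemma no_p3:
  assumes g: "good n S" and z: "z < n" "\<forall>p\<in>S. z \<notin> p"
    and ba: "{b,a} \<in> S" and bc: "{b,c} \<in> S" and ac: "a \<noteq> c"
    and la: "\<forall>p\<in>S. a \<in> p \<longrightarrow> p = {b,a}" and lc: "\<forall>p\<in>S. c \<in> p \<longrightarrow> p = {b,c}"
    and lb: "\<forall>p\<in>S. b \<in> p \<longrightarrow> p = {b,a} \<or> p = {b,c}"
  shows False
proof -
  have ce: "{b,a} \<in> complete_edges n" "{b,c} \<in> complete_edges n" using g ba bc unfolding good_def by auto
  have abn: "a < n" "b < n" "c < n" "a \<noteq> b" "c \<noteq> b"
    using ce unfolding complete_edges_def by (auto simp: doubleton_eq_iff)
  have zz: "z \<noteq> a" "z \<noteq> b" "z \<noteq> c" using z(2) ba bc by auto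
  have e: "{a,c} \<in> complete_edges n" "{b,z} \<in> complete_edges n" using abn z zz ac by (auto simp: complete_edges_def)
  have ne: "{a,c} \<noteq> {b,z}" using abn zz by (auto simp: doubleton_eq_iff)
  have "sig_eq S {a,c} {b,z}" unfolding sig_eq_def
  proof
    fix p assume p: "p \<in> S"
    show "card (p \<inter> {a,c}) = card (p \<inter> {b,z})"
    proof (cases "p = {b,a}")
      case True
      hence "p \<inter> {a,c} = {a}" "p \<inter> {b,z} = {b}" using abn zz ac by auto
      thus ?thesis by simp
    next
      case F1: False
      show ?thesis
      proof (cases "p = {b,c}")
        case True
        hence "p \<inter> {a,c} = {c}" "p \<inter> {b,z} = {b}" using abn zz ac by auto
        thus ?thesis by simp
      next
        case False
        have "a \<notin> p" using la p F1 by blast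
        moreover have "c \<notin> p" using lc p False by blast
        moreover have "b \<notin> p" using lb p F1 False by blast
        moreover have "z \<notin> p" using z(2) p by blast
        ultimately have "p \<inter> {a,c} = {}" "p \<inter> {b,z} = {}" by auto
        thus ?thesis by simp
      qed
    qed
  qed
  thus False using good_sig[OF g e] ne by blast
qed

lemma dg_0: "finite S \<Longrightarrow> dg S x = 0 \<longleftrightarrow> (\<forall>p\<in>S. x \<notin> p)"
proof -
  assume f: "finite S"
  have "dg S x = 0 \<longleftrightarrow> {p\<in>S. x \<in> p} = {}" unfolding dg_def using f by simp
  also have "\<dots> \<longleftrightarrow> (\<forall>p\<in>S. x \<notin> p)" by blast
  finally show ?thesis .
qed

lemma singleton_mem: assumes "{p\<in>S. x \<in> p} = {p0}" shows "p0 \<in> S" "x \<in> p0" "\<And>p. p \<in> S \<Longrightarrow> x \<in> p \<Longrightarrow> p = p0"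
proof -
  have "p0 \<in> {p\<in>S. x \<in> p}" using assms by simp
  thus "p0 \<in> S" "x \<in> p0" by simp_all
  fix p assume "p \<in> S" "x \<in> p"
  hence "p \<in> {p\<in>S. x \<in> p}" by simp
  thus "p = p0" unfolding assms by simp
qed

lemma dg_1_conv:
  assumes "dg S x = 1" "q \<in> S" "x \<in> q"
  shows "\<forall>p\<in>S. x \<in> p \<longrightarrow> p = q"
proof -
  obtain p0 where p0: "{p\<in>S. x \<in> p} = {p0}" using assms(1) unfolding dg_def by (rule card_1_singletonE)
  note sm = singleton_mem[OF p0]
  have "q = p0" using sm(3) assms(2,3) .
  thus ?thesis using sm(3) by blast
qed

definition wt :: "real \<Rightarrow> nat set set \<Rightarrow> nat \<Rightarrow> nat set \<Rightarrow> real" where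
  "wt b S x p = (if dg S x = 1 then b else if (\<exists>y. p = {x,y} \<and> dg S y = 1) then 2 - b else 1)"

lemma edge_sum:
  assumes g: "good n S" and n: "n \<ge> 3" and p: "p \<in> S"
  shows "(\<Sum>x\<in>p. wt b S x p) = 2"
proof -
  have "p \<in> complete_edges n" using g p unfolding good_def by auto
  then obtain a c where ac: "p = {a,c}" "a \<noteq> c" unfolding complete_edges_def by auto
  have s: "(\<Sum>x\<in>p. wt b S x p) = wt b S a p + wt b S c p" using ac by simp
  have oa: "(\<exists>y. p = {a,y} \<and> dg S y = 1) \<longleftrightarrow> dg S c = 1" using ac by (auto simp: doubleton_eq_iff)
  have oc: "(\<exists>y. p = {c,y} \<and> dg S y = 1) \<longleftrightarrow> dg S a = 1" using ac by (auto simp: doubleton_eq_iff)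
  have nb: "\<not> (dg S a = 1 \<and> dg S c = 1)"
  proof
    assume h: "dg S a = 1 \<and> dg S c = 1"
    have ap: "a \<in> p" "c \<in> p" using ac(1) by simp_all
    have h1: "dg S a = 1" "dg S c = 1" using h by simp_all
    note A = dg_1_conv[OF h1(1) p ap(1)] dg_1_conv[OF h1(2) p ap(2)]
    have "{a,c} \<in> S" using p ac(1) by simp
    thus False using no_leafpair[OF g n _ ac(2) A[unfolded ac(1)]] by blast
  qed
  have "wt b S a p + wt b S c p = 2"
  proof (cases "dg S a = 1")
    case True
    hence "dg S c \<noteq> 1" using nb by blast
    hence "wt b S a p = b" "wt b S c p = 2 - b" using True oc by (simp_all add: wt_def)
    thus ?thesis by simp
  next
    case F: False
    show ?thesis
    proof (cases "dg S c = 1")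
      case True
      hence "wt b S a p = 2 - b" "wt b S c p = b" using F oa by (simp_all add: wt_def)
      thus ?thesis by simp
    next
      case False
      have n1: "\<not> (\<exists>y. p = {a,y} \<and> dg S y = 1)" "\<not> (\<exists>y. p = {c,y} \<and> dg S y = 1)"
        using oa oc F False by blast+
      have "wt b S a p = 1" using F n1(1) unfolding wt_def by (simp only: if_False)
      moreover have "wt b S c p = 1" using False n1(2) unfolding wt_def by (simp only: if_False)
      ultimately show ?thesis by simp
    qed
  qed
  thus ?thesis using s by simp
qed

lemma discharge:
  fixes f :: "nat \<Rightarrow> nat set \<Rightarrow> real"
  assumes fin: "finite S" and sub: "S \<subseteq> complete_edges n"
    and es: "\<forall>p\<in>S. (\<Sum>x\<in>p. f x p) \<le> 2"
    and nn: "\<forall>x p. 0 \<le> f x p"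
    and vs: "\<forall>x<n. dg S x \<noteq> 0 \<longrightarrow> b \<le> (\<Sum>p\<in>{p\<in>S. x \<in> p}. f x p)"
    and b: "b \<ge> 0"
  shows "b * real (card {x\<in>{..<n}. dg S x \<noteq> 0}) \<le> 2 * real (card S)"
proof -
  have "(\<Sum>x\<in>{..<n}. \<Sum>p\<in>{p. p \<in> S \<and> x \<in> p}. f x p) = (\<Sum>p\<in>S. \<Sum>x\<in>{x. x \<in> {..<n} \<and> x \<in> p}. f x p)"
    by (rule sum.swap_restrict) (use fin in auto)
  also have "\<dots> = (\<Sum>p\<in>S. \<Sum>x\<in>p. f x p)"
  proof (rule sum.cong)
    fix p assume "p \<in> S"
    hence "p \<subseteq> {..<n}" using sub CE_card by blast
    hence "{x. x \<in> {..<n} \<and> x \<in> p} = p" by auto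
    thus "(\<Sum>x\<in>{x. x \<in> {..<n} \<and> x \<in> p}. f x p) = (\<Sum>x\<in>p. f x p)" by simp
  qed simp
  also have "\<dots> \<le> (\<Sum>p\<in>S. 2)" by (rule sum_mono) (use es in auto)
  also have "\<dots> = 2 * real (card S)" by simp
  finally have up: "(\<Sum>x\<in>{..<n}. \<Sum>p\<in>{p. p \<in> S \<and> x \<in> p}. f x p) \<le> 2 * real (card S)" .
  have "(\<Sum>x\<in>{..<n}. if dg S x \<noteq> 0 then b else 0) \<le> (\<Sum>x\<in>{..<n}. \<Sum>p\<in>{p. p \<in> S \<and> x \<in> p}. f x p)"
  proof (rule sum_mono)
    fix x assume x: "x \<in> {..<n}"
    show "(if dg S x \<noteq> 0 then b else 0) \<le> (\<Sum>p\<in>{p. p \<in> S \<and> x \<in> p}. f x p)"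
    proof (cases "dg S x \<noteq> 0")
      case True thus ?thesis using vs x by simp
    next
      case False
      have "0 \<le> (\<Sum>p\<in>{p. p \<in> S \<and> x \<in> p}. f x p)" by (rule sum_nonneg) (use nn in blast)
      thus ?thesis using False by simp
    qed
  qed
  moreover have "(\<Sum>x\<in>{..<n}. if dg S x \<noteq> 0 then b else 0) = b * real (card {x\<in>{..<n}. dg S x \<noteq> 0})"
  proof -
    have "(\<Sum>x\<in>{x\<in>{..<n}. dg S x \<noteq> 0}. b) = (\<Sum>x\<in>{..<n}. if dg S x \<noteq> 0 then b else 0)"
      by (rule sum.inter_filter) simp
    thus ?thesis by (simp add: mult.commute)
  qed
  ultimately show ?thesis using up by linarith
qed

lemma wt_ge:
  assumes "1 \<le> b" "b \<le> 2" "dg S x \<noteq> 1" shows "2 - b \<le> wt b S x p" "wt b S x p = 2 - b \<or> wt b S x p = 1"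
  using assms by (auto simp: wt_def)

lemma vertex_A:
  assumes fin: "finite S" and d: "dg S x \<noteq> 0"
  shows "4/3 \<le> (\<Sum>p\<in>{p\<in>S. x \<in> p}. wt (4/3) S x p)"
proof (cases "dg S x = 1")
  case True
  hence "(\<Sum>p\<in>{p\<in>S. x \<in> p}. wt (4/3) S x p) = (\<Sum>p\<in>{p\<in>S. x \<in> p}. 4/3)" by (simp add: wt_def)
  also have "\<dots> = 4/3" using True unfolding dg_def by simp
  finally show ?thesis by simp
next
  case False
  have k: "2/3 \<le> wt (4/3) S x p" for p using wt_ge(1)[of "4/3" S x p] False by simp
  have "real (card {p\<in>S. x \<in> p}) * (2/3) \<le> (\<Sum>p\<in>{p\<in>S. x \<in> p}. wt (4/3) S x p)"
    by (rule sum_bounded_below) (rule k)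
  moreover have "card {p\<in>S. x \<in> p} \<ge> 2" using False d unfolding dg_def by linarith
  hence "real (card {p\<in>S. x \<in> p}) \<ge> 2" by simp
  ultimately show ?thesis by linarith
qed

lemma vertex_B:
  assumes g: "good n S" and z: "z < n" "\<forall>p\<in>S. z \<notin> p" and d: "dg S x \<noteq> 0"
  shows "3/2 \<le> (\<Sum>p\<in>{p\<in>S. x \<in> p}. wt (3/2) S x p)"
proof -
  have fin: "finite S" using good_fin[OF g] .
  have sub: "S \<subseteq> complete_edges n" using g unfolding good_def by auto
  show ?thesis
  proof (cases "dg S x = 1")
    case True
    hence "(\<Sum>p\<in>{p\<in>S. x \<in> p}. wt (3/2) S x p) = (\<Sum>p\<in>{p\<in>S. x \<in> p}. 3/2)" by (simp add: wt_def)
    also have "\<dots> = 3/2" using True unfolding dg_def by simp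
    finally show ?thesis by simp
  next
    case False
    have k: "1/2 \<le> wt (3/2) S x p" for p using wt_ge(1)[of "3/2" S x p] False by simp
    have lb: "real (card {p\<in>S. x \<in> p}) * (1/2) \<le> (\<Sum>p\<in>{p\<in>S. x \<in> p}. wt (3/2) S x p)"
      by (rule sum_bounded_below) (rule k)
    show ?thesis
    proof (cases "card {p\<in>S. x \<in> p} \<ge> 3")
      case True
      hence "real (card {p\<in>S. x \<in> p}) \<ge> 3" by simp
      thus ?thesis using lb by linarith
    next
      case c2: False
      hence "card {p\<in>S. x \<in> p} = 2" using False d unfolding dg_def by linarith
      then obtain p1 p2 where pp: "{p\<in>S. x \<in> p} = {p1,p2}" "p1 \<noteq> p2" by (auto simp: card_2_iff)
      have sm: "(\<Sum>p\<in>{p\<in>S. x \<in> p}. wt (3/2) S x p) = wt (3/2) S x p1 + wt (3/2) S x p2"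
        using pp by simp
      have p12: "p1 \<in> S" "x \<in> p1" "p2 \<in> S" "x \<in> p2" using pp by blast+
      show ?thesis
      proof (cases "wt (3/2) S x p1 = 1/2 \<and> wt (3/2) S x p2 = 1/2")
        case True
        have ex: "\<exists>y. q = {x,y} \<and> dg S y = 1" if "wt (3/2) S x q = 1/2" for q
        proof (rule ccontr)
          assume "\<not> (\<exists>y. q = {x,y} \<and> dg S y = 1)"
          hence "wt (3/2) S x q = 1" using False unfolding wt_def by (simp only: if_False)
          thus False using that by simp
        qed
        have "\<exists>y. p1 = {x,y} \<and> dg S y = 1" "\<exists>y. p2 = {x,y} \<and> dg S y = 1"
          using ex True by blast+
        then obtain a c where a: "p1 = {x,a}" "dg S a = 1" and c: "p2 = {x,c}" "dg S c = 1" by blast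
        have ac: "a \<noteq> c" using a c pp by auto
        have "a \<in> p1" "c \<in> p2" using a(1) c(1) by simp_all
        note lac = dg_1_conv[OF a(2) p12(1) this(1)] dg_1_conv[OF c(2) p12(3) this(2)]
        note la = lac(1)[unfolded a(1)] and lc = lac(2)[unfolded c(1)]
        have lb: "\<forall>p\<in>S. x \<in> p \<longrightarrow> p = {x,a} \<or> p = {x,c}"
        proof (intro ballI impI)
          fix p assume "p \<in> S" "x \<in> p"
          hence "p \<in> {p\<in>S. x \<in> p}" by simp
          hence "p = p1 \<or> p = p2" unfolding pp(1) by simp
          thus "p = {x,a} \<or> p = {x,c}" using a(1) c(1) by simp
        qed
        have xa: "{x,a} \<in> S" "{x,c} \<in> S" using p12(1,3) a(1) c(1) by simp_all
        show ?thesis using no_p3[OF g z xa ac la lc lb] by simp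
      next
        case F2: False
        have w1: "wt (3/2) S x p1 = 1/2 \<or> wt (3/2) S x p1 = 1" using wt_ge(2)[of "3/2" S x p1] False by simp
        have w2: "wt (3/2) S x p2 = 1/2 \<or> wt (3/2) S x p2 = 1" using wt_ge(2)[of "3/2" S x p2] False by simp
        show ?thesis using w1 w2 F2 unfolding sm by auto
      qed
    qed
  qed
qed

lemma lower:
  assumes g: "good n S" and n: "n \<ge> 6"
  shows "2 * n \<le> 3 * card S"
proof -
  have fin: "finite S" using good_fin[OF g] .
  have sub: "S \<subseteq> complete_edges n" using g unfolding good_def by auto
  define I where "I = {x\<in>{..<n}. dg S x = 0}"
  have cI: "card I \<le> 1"
  proof -
    have "\<forall>a1\<in>I. \<forall>a2\<in>I. a1 = a2"
    proof (intro ballI, rule ccontr)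
      fix a1 a2 assume "a1 \<in> I" "a2 \<in> I" "a1 \<noteq> a2"
      thus False using no_two_iso[OF g _ _ _ \<open>a1 \<noteq> a2\<close>] n dg_0[OF fin] unfolding I_def by auto
    qed
    thus ?thesis using card_le_Suc0_iff_eq[of I] unfolding I_def by auto
  qed
  have cN: "card {x\<in>{..<n}. dg S x \<noteq> 0} = n - card I"
  proof -
    have "{x\<in>{..<n}. dg S x \<noteq> 0} = {..<n} - I" unfolding I_def by auto
    moreover have "I \<subseteq> {..<n}" unfolding I_def by auto
    moreover have "finite I" unfolding I_def by simp
    ultimately show ?thesis by (simp add: card_Diff_subset)
  qed
  have es: "\<forall>p\<in>S. (\<Sum>x\<in>p. wt b S x p) \<le> 2" for b using edge_sum[OF g] n by simp
  have nn1: "\<forall>x p. 0 \<le> wt (4/3) S x p" by (simp add: wt_def)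
  have nn2: "\<forall>x p. 0 \<le> wt (3/2) S x p" by (simp add: wt_def)
  show ?thesis
  proof (cases "card I = 0")
    case True
    have "4/3 * real (card {x\<in>{..<n}. dg S x \<noteq> 0}) \<le> 2 * real (card S)"
      by (rule discharge[OF fin sub es[of "4/3"] nn1]) (use vertex_A[OF fin] in auto)
    hence "4/3 * real n \<le> 2 * real (card S)" using cN True by simp
    hence "real (2 * n) \<le> real (3 * card S)" by simp
    thus ?thesis by linarith
  next
    case False
    hence "card I = 1" using cI by simp
    then obtain z where zI: "I = {z}" by (rule card_1_singletonE)
    have z: "z < n" "\<forall>p\<in>S. z \<notin> p" using zI dg_0[OF fin] unfolding I_def by auto
    have "3/2 * real (card {x\<in>{..<n}. dg S x \<noteq> 0}) \<le> 2 * real (card S)"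
      by (rule discharge[OF fin sub es[of "3/2"] nn2]) (use vertex_B[OF g z] in auto)
    hence "3/2 * real (n - 1) \<le> 2 * real (card S)" using cN zI by simp
    hence "real (3 * (n - 1)) \<le> real (4 * card S)" by simp
    hence "3 * (n - 1) \<le> 4 * card S" by linarith
    thus ?thesis using n by presburger
  qed
qed


lemma Rk_ineq: fixes x :: real assumes "x \<ge> 6"
  shows "(2*x-3)/(x*(x-2)) < 2/(x-2)" "2/x < (2*x-3)/(x*(x-2))"
proof -
  have p: "0 < x" "0 < x - 2" using assms by auto
  have e: "(2*x-3)/(x*(x-2)) = ((2*x-3)/x)/(x-2)" by simp
  have "(2*x-3)/x < 2" using p by (simp add: divide_less_eq)
  thus "(2*x-3)/(x*(x-2)) < 2/(x-2)" unfolding e by (rule divide_strict_right_mono) (use p in auto)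
  have ne: "x \<noteq> 2" "x \<noteq> 0" using p by auto
  have e2: "2/x = (2*(x-2)/x)/(x-2)" using ne by (simp add: field_simps)
  have "2*(x-2)/x < (2*x-3)/x" using p by (intro divide_strict_right_mono) auto
  thus "2/x < (2*x-3)/(x*(x-2))" unfolding e e2 by (rule divide_strict_right_mono) (use p in auto)
qed
lemma ceil_eq: "nat \<lceil>2 * real n / 3\<rceil> = n - n div 3"
proof -
  define q where "q = n div 3"
  define r where "r = n mod 3"
  have nq: "n = 3*q + r" "r < 3" unfolding q_def r_def by auto
  have "n - n div 3 = 2*q + r" using nq unfolding q_def[symmetric] by simp
  moreover have "\<lceil>2 * real n / 3\<rceil> = int (2*q + r)"
  proof (rule ceiling_unique)
    have "real n = 3 * real q + real r" using nq by simp
    moreover have "real r < 3" using nq by simp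
    ultimately show "real_of_int (int (2*q + r)) - 1 < 2 * real n / 3" "2 * real n / 3 \<le> real_of_int (int (2*q + r))"
      by (simp_all add: field_simps)
  qed
  ultimately show ?thesis by simp
qed

lemma Rk_inj:
  assumes n: "n \<ge> 6" and k: "k1 \<le> 2" "k2 \<le> 2" and eq: "Rk n k1 = Rk n k2"
  shows "k1 = k2"
proof -
  have x: "real n \<ge> 6" using n by simp
  note ie = Rk_ineq[OF x]
  have a: "Rk n 1 < Rk n 2" "Rk n 0 < Rk n 1" using ie by (simp_all add: Rk_def)
  have "k1 = 0 \<or> k1 = 1 \<or> k1 = 2" "k2 = 0 \<or> k2 = 1 \<or> k2 = 2" using k by auto
  thus ?thesis using a eq by auto
qed

lemma card_int_le: assumes "p \<in> complete_edges n" shows "card (p \<inter> e) \<le> 2"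
proof -
  have "card (p \<inter> e) \<le> card p" using CE_card[OF assms] by (intro card_mono) auto
  thus ?thesis using CE_card[OF assms] by simp
qed

lemma solves_iff:
  assumes n: "n \<ge> 6"
  shows "solves_fed {..<n} (complete_edges n) S \<longleftrightarrow> good n S"
proof -
  have P: "{{r, s} | r s. r \<in> {..<n} \<and> s \<in> {..<n} \<and> r \<noteq> s} = complete_edges n"
    by (auto simp: complete_edges_def)
  have n4: "n \<ge> 4" using n by simp
  have key: "(\<exists>r s. {r,s} \<in> S \<and> eff_res {..<n} (complete_edges n - {e}) r s \<noteq> eff_res {..<n} (complete_edges n - {e'}) r s)
      \<longleftrightarrow> \<not> sig_eq S e e'"
    if sub: "S \<subseteq> complete_edges n" and e: "e \<in> complete_edges n" and e': "e' \<in> complete_edges n" for e e'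
  proof
    assume "\<exists>r s. {r,s} \<in> S \<and> eff_res {..<n} (complete_edges n - {e}) r s \<noteq> eff_res {..<n} (complete_edges n - {e'}) r s"
    then obtain r s where rs: "{r,s} \<in> S" "eff_res {..<n} (complete_edges n - {e}) r s \<noteq> eff_res {..<n} (complete_edges n - {e'}) r s"
      by blast
    have "{r,s} \<in> complete_edges n" using rs(1) sub by blast
    hence rsn: "r < n" "s < n" "r \<noteq> s" unfolding complete_edges_def by (auto simp: doubleton_eq_iff)
    show "\<not> sig_eq S e e'"
    proof
      assume "sig_eq S e e'"
      hence "card ({r,s} \<inter> e) = card ({r,s} \<inter> e')" using rs(1) unfolding sig_eq_def by blast
      thus False using rs(2) eff_res_Kn[OF n4 e rsn] eff_res_Kn[OF n4 e' rsn] by simp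
    qed
  next
    assume "\<not> sig_eq S e e'"
    then obtain p where p: "p \<in> S" "card (p \<inter> e) \<noteq> card (p \<inter> e')" unfolding sig_eq_def by blast
    have pc: "p \<in> complete_edges n" using p(1) sub by blast
    then obtain r s where rs: "p = {r,s}" "r < n" "s < n" "r \<noteq> s" unfolding complete_edges_def by blast
    have "Rk n (card (p \<inter> e)) \<noteq> Rk n (card (p \<inter> e'))"
      using Rk_inj[OF n card_int_le[OF pc] card_int_le[OF pc]] p(2) by blast
    hence "eff_res {..<n} (complete_edges n - {e}) r s \<noteq> eff_res {..<n} (complete_edges n - {e'}) r s"
      using eff_res_Kn[OF n4 e rs(2-4)] eff_res_Kn[OF n4 e' rs(2-4)] rs(1) by simp
    thus "\<exists>r s. {r,s} \<in> S \<and> eff_res {..<n} (complete_edges n - {e}) r s \<noteq> eff_res {..<n} (complete_edges n - {e'}) r s"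
      using p(1) rs(1) by blast
  qed
  show ?thesis
  proof
    assume h: "solves_fed {..<n} (complete_edges n) S"
    hence sub: "S \<subseteq> complete_edges n" unfolding solves_fed_def P by blast
    show "good n S" unfolding good_def
    proof (intro conjI sub ballI impI)
      fix e e' assume e: "e \<in> complete_edges n" and e': "e' \<in> complete_edges n" and ne: "e \<noteq> e'"
      have "\<exists>r s. {r,s} \<in> S \<and> eff_res {..<n} (complete_edges n - {e}) r s \<noteq> eff_res {..<n} (complete_edges n - {e'}) r s"
        using h e e' ne unfolding solves_fed_def by blast
      thus "\<not> sig_eq S e e'" using key[OF sub e e'] by blast
    qed
  next
    assume g: "good n S"
    hence sub: "S \<subseteq> complete_edges n" unfolding good_def by blast
    show "solves_fed {..<n} (complete_edges n) S" unfolding solves_fed_def P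
    proof (intro conjI sub ballI impI)
      fix e e' assume e: "e \<in> complete_edges n" and e': "e' \<in> complete_edges n" and ne: "e \<noteq> e'"
      have "\<not> sig_eq S e e'" using g e e' ne unfolding good_def by blast
      thus "\<exists>r s. {r,s} \<in> S \<and> eff_res {..<n} (complete_edges n - {e}) r s \<noteq> eff_res {..<n} (complete_edges n - {e'}) r s"
        using key[OF sub e e'] by blast
    qed
  qed
qed

theorem theorem2p1:
  fixes n :: nat
  assumes "n \<ge> 6"
  shows "min_measurements {..<n} (complete_edges n) = nat \<lceil>2 * real n / 3\<rceil>"
proof -
  have sf: "starf n (cen n)" by (rule cen_starf[OF assms])
  have g0: "good n (starf.SS n (cen n))" unfolding good_def
  proof (intro conjI ballI impI)
    show "starf.SS n (cen n) \<subseteq> complete_edges n" by (rule starf.SS_CE[OF sf])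
    fix e e' assume e: "e \<in> complete_edges n" and e': "e' \<in> complete_edges n" and ne: "e \<noteq> e'"
    show "\<not> sig_eq (starf.SS n (cen n)) e e'" using starf.injective[OF sf _ e e'] ne by blast
  qed
  have c0: "card (starf.SS n (cen n)) = n - n div 3"
    using starf.card_SS[OF sf] cen_card[OF assms] by simp
  have "(LEAST k. \<exists>S. solves_fed {..<n} (complete_edges n) S \<and> card S = k) = n - n div 3"
  proof (rule Least_equality)
    show "\<exists>S. solves_fed {..<n} (complete_edges n) S \<and> card S = n - n div 3"
      using g0 c0 solves_iff[OF assms] by blast
  next
    fix k assume "\<exists>S. solves_fed {..<n} (complete_edges n) S \<and> card S = k"
    then obtain S where S: "good n S" "card S = k" using solves_iff[OF assms] by blast
    have "2 * n \<le> 3 * k" using lower[OF S(1) assms] S(2) by simp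
    thus "n - n div 3 \<le> k" by presburger
  qed
  thus ?thesis unfolding min_measurements_def ceil_eq .
qed

end
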